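(* The language $L_1=\{\,a^n b^{n+\lfloor \sqrt{n} \rfloor} \mid n \ge 1\,\}$ belongs to $\mathscr{L}_{rt}(\mathrm{MC\text{-}OCA}(1))$, i.e., it is accepted by some real-time one-way cellular automaton that is max communication bounded by a constant.
   Context: A cellular automaton (CA) is a system $\langle S,F,A,B,\#,b_l,b_r,\delta\rangle$ with finite nonempty state set $S$, accepting states $F\subseteq S$, nonempty input alphabet $A\subseteq S$, set $B$ of communication symbols, boundary symbol $\#\notin B$, communication functions $b_l,b_r:S\to B\cup\{\bot\}$ (information sent to the left/right neighbor; $\bot$ means nothing is sent), and local transition function $\delta:(B\cup\{\#,\bot\})\times S\times(B\cup\{\#,\bot\})\to S$. On input $w=a_1\cdots a_n\in A^+$ the array has cells $1,\dots,n$, initial configuration $c_0(i)=a_i$, and $c_{t+1}(i)=\delta(b_r(c_t(i-1)),c_t(i),b_l(c_t(i+1)))$ for $2\le i\le n-1$; the leftmost cell receives $\#$ from the left at the first step and $\bot$ afterwards, symmetrically for the rightmost cell. The input is accepted if at some time the leftmost cell enters a state in $F$. The device has time complexity $t$ if every accepted $w$ is accepted within $t(|w|)$ steps; real time means $t(n)=n$. A one-way CA (OCA) is a CA in which $b_r$ maps every state to $\bot$ and the leftmost cell does not receive the boundary symbol. The number of communications between cells $i$ and $i+1$ up to time $t$ is $\mathrm{com}(i,t)=|\{j: 0\le j<t,\ b_r(c_j(i))\ne\bot \text{ or } b_l(c_j(i+1))\ne\bot\}|$. For a device of time complexity $t$, $\mathrm{mcom}(w)=\max_{1\le i\le |w|-1}\mathrm{com}(i,t(|w|))$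 and $\mathrm{scom}(w)=\sum_{i=1}^{|w|-1}\mathrm{com}(i,t(|w|))$. A device is max (resp. sum) communication bounded by $f$ if every accepted $w$ is accepted with a computation having $\mathrm{mcom}(w)\le f(|w|)$ (resp. $\mathrm{scom}(w)\le f(|w|)$). $\mathrm{MC\text{-}OCA}(f)$ (resp. $\mathrm{SC\text{-}OCA}(f)$, $\mathrm{MC\text{-}CA}(f)$) denotes OCAs (resp. OCAs, CAs) that are max (resp. sum, max) communication bounded by some $g\in O(f)$. $\mathscr{L}_{rt}(X)$ is the family of languages accepted by real-time devices of type $X$. *)

theory Defs
  imports Complex_Main "HOL-Library.Landau_Symbols"
begin

datatype letter = La | Lb

(* Information arriving at a cell: a communication symbol, the boundary symbol #, or nothing (bottom) *)
datatype 'b msg = Sym 'b | Bnd | Bot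

definition to_msg :: "'b option \<Rightarrow> 'b msg" where
  "to_msg x = (case x of None \<Rightarrow> Bot | Some b \<Rightarrow> Sym b)"

(* The set B of communication symbols is the type 'b; "\<bottom>" is None.
   The input alphabet A \<subseteq> S is given as the image of an injective map
   inp from the letters of the language into the states. *)
record ('s,'b) ca =
  states :: "'s set"
  acc    :: "'s set"
  inp    :: "letter \<Rightarrow> 's"
  bl     :: "'s \<Rightarrow> 'b option"
  br     :: "'s \<Rightarrow> 'b option"
  delta  :: "'b msg \<Rightarrow> 's \<Rightarrow> 'b msg \<Rightarrow> 's"

definition wf_ca :: "('s,'b) ca \<Rightarrow> bool" where
  "wf_ca M \<longleftrightarrow> finite (states M) \<and> states M \<noteq> {} \<and> acc M \<subseteq> states M
     \<and> inj (inp M) \<and> range (inp M) \<subseteq> states M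
     \<and> (\<forall>x s y. s \<in> states M \<longrightarrow> delta M x s y \<in> states M)"

definition is_oca :: "('s,'b) ca \<Rightarrow> bool" where
  "is_oca M \<longleftrightarrow> wf_ca M \<and> (\<forall>s. br M s = None)"

(* The leftmost cell does not receive the boundary symbol (it receives bottom),
   the rightmost cell receives # at the first step and bottom afterwards. *)
fun oca_cfg :: "('s,'b) ca \<Rightarrow> letter list \<Rightarrow> nat \<Rightarrow> nat \<Rightarrow> 's" where
  "oca_cfg M w 0 i = inp M (w ! (i - 1))"
| "oca_cfg M w (Suc t) i =
     delta M
       (if i = 1 then Bot else to_msg (br M (oca_cfg M w t (i - 1))))
       (oca_cfg M w t i)
       (if i = length w then (if t = 0 then Bnd else Bot)
        else to_msg (bl M (oca_cfg M w t (i + 1))))"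

definition oca_lang :: "('s,'b) ca \<Rightarrow> letter list set" where
  "oca_lang M = {w. w \<noteq> [] \<and> (\<exists>t. oca_cfg M w t 1 \<in> acc M)}"

definition oca_real_time :: "('s,'b) ca \<Rightarrow> bool" where
  "oca_real_time M \<longleftrightarrow> (\<forall>w \<in> oca_lang M. \<exists>t \<le> length w. oca_cfg M w t 1 \<in> acc M)"

definition oca_com :: "('s,'b) ca \<Rightarrow> letter list \<Rightarrow> nat \<Rightarrow> nat \<Rightarrow> nat" where
  "oca_com M w i t = card {j. j < t \<and> (br M (oca_cfg M w j i) \<noteq> None
                                    \<or> bl M (oca_cfg M w j (i + 1)) \<noteq> None)}"

(* mcom(w) for time complexity t(n) = n (real time); the max over the empty
   range (|w| = 1) is taken to be 0 *)
definition oca_mcom_rt :: "('s,'b) ca \<Rightarrow> letter list \<Rightarrow> nat" where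
  "oca_mcom_rt M w = Max ({0} \<union> {oca_com M w i (length w) | i. 1 \<le> i \<and> i \<le> length w - 1})"

definition L_rt_MC_OCA :: "(nat \<Rightarrow> real) \<Rightarrow> letter list set \<Rightarrow> bool" where
  "L_rt_MC_OCA f L \<longleftrightarrow>
     (\<exists>M :: (nat, nat) ca. is_oca M \<and> oca_real_time M \<and> oca_lang M = L \<and>
        (\<exists>g :: nat \<Rightarrow> real. g \<in> O(f) \<and>
           (\<forall>w \<in> oca_lang M. real (oca_mcom_rt M w) \<le> g (length w))))"

definition L1 :: "letter list set" where
  "L1 = {replicate n La @ replicate (n + nat \<lfloor>sqrt (real n)\<rfloor>) Lb | n. n \<ge> 1}"

end

theory Submission
  imports Defs "HOL-Library.Discrete_Functions" "HOL-Library.Countable"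
begin


definition seg :: "nat \<Rightarrow> nat" where "seg p = floor_sqrt (Suc p)"

lemma seg_lo: "seg p * seg p \<le> Suc p"
  using floor_sqrt_power2_le[of "Suc p"] by (simp add: seg_def power2_eq_square)

lemma seg_hi: "Suc p < (seg p + 1) * (seg p + 1)"
  using Suc_floor_sqrt_power2_gt[of "Suc p"] by (simp add: seg_def power2_eq_square)

lemma seg_unique: "k * k \<le> Suc p \<Longrightarrow> Suc p < (k+1)*(k+1) \<Longrightarrow> seg p = k"
  unfolding seg_def by (rule floor_sqrt_unique) (auto simp: power2_eq_square)

lemma seg_pos: "seg p \<ge> 1"
proof (rule ccontr)
  assume "\<not> 1 \<le> seg p" then have "seg p = 0" by simp
  with seg_hi[of p] show False by simp
qed

definition mark :: "nat \<Rightarrow> bool" where "mark p \<longleftrightarrow> Suc p = seg p * seg p"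
definition half :: "nat \<Rightarrow> bool" where "half p \<longleftrightarrow> p = seg p * seg p + seg p"

lemma seg_prev_mark:
  assumes "p \<ge> 1" "mark p"
  shows "seg (p - 1) = seg p - 1" "seg p \<ge> 2"
proof -
  let ?k = "seg p"
  have e: "Suc p = ?k * ?k" using assms(2) by (simp add: mark_def)
  have k1: "?k \<ge> 1" by (rule seg_pos)
  show k2: "?k \<ge> 2"
  proof (rule ccontr)
    assume "\<not> 2 \<le> ?k" then have "?k = 1" using k1 by simp
    with e assms(1) show False by simp
  qed
  obtain j where j: "?k = Suc j" using k1 by (cases ?k) auto
  have "j * j \<le> Suc (p - 1)" "Suc (p - 1) < (j+1)*(j+1)"
    using e j assms(1) by (auto simp: algebra_simps)
  then have "seg (p - 1) = j" by (rule seg_unique)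
  then show "seg (p - 1) = seg p - 1" using j by simp
qed

lemma seg_prev_nomark:
  assumes "p \<ge> 1" "\<not> mark p"
  shows "seg (p - 1) = seg p"
proof -
  let ?k = "seg p"
  have "?k * ?k \<le> Suc p" "Suc p < (?k+1)*(?k+1)" by (rule seg_lo, rule seg_hi)
  moreover have "Suc p \<noteq> ?k * ?k" using assms(2) by (simp add: mark_def)
  ultimately have "?k * ?k \<le> Suc (p - 1)" "Suc (p - 1) < (?k+1)*(?k+1)" using assms(1) by auto
  then show ?thesis by (rule seg_unique)
qed

lemma half_seg: "k \<ge> 1 \<Longrightarrow> p = k * k + k \<Longrightarrow> seg p = k"
  by (rule seg_unique) (auto simp: algebra_simps)

lemma mark_not_half: "mark p \<Longrightarrow> half p \<Longrightarrow> False"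
  using seg_pos[of p] by (auto simp: mark_def half_def)

definition Gz :: "nat \<Rightarrow> nat \<Rightarrow> nat" where
  "Gz p t = (if t = 2*p \<and> p \<ge> 1 then 1 else if t = 2*p+1 then 2 else 0)"

definition TQ :: "nat \<Rightarrow> nat" where
  "TQ p = 2*p + 1 + seg p - (if mark p then 1 else 0)"

definition Gq :: "nat \<Rightarrow> nat \<Rightarrow> nat" where
  "Gq p t = (if p = 0 then (if t = 1 then 5 else if t = 2 then 6 else if t = 3 then 7 else 0)
     else if t = TQ p then 1 else if t = TQ p + 1 then (if mark p then 3 else 2)
     else if t = TQ p + 2 \<and> mark p then 4 else 0)"

definition Gm :: "nat \<Rightarrow> nat \<Rightarrow> nat" where
  "Gm p t = (if mark p \<and> 2*p+1 \<le> t then 2 else if half p \<and> 2*p+1 \<le> t then 1 else 0)"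

definition Gf :: "nat \<Rightarrow> nat \<Rightarrow> nat" where
  "Gf p t = (if p < seg p * seg p + seg p
     then (if t = p + seg p * seg p + seg p + 1 then 1 else 0)
     else (if t = p + seg p * seg p + 2 * seg p + 1 then 2 else 0))"

definition zstep :: "nat \<Rightarrow> bool \<Rightarrow> nat" where
  "zstep z zin = (if z = 1 then 2 else if zin then 1 else 0)"
definition qstep :: "nat \<Rightarrow> nat \<Rightarrow> bool \<Rightarrow> nat" where
  "qstep q mk qin = (if q = 1 then (if mk = 2 then 3 else 2) else if q = 3 then 4
     else if q = 5 then 6 else if q = 6 then 7 else if q = 0 then (if qin then 1 else 0) else 0)"
definition fstep :: "nat \<Rightarrow> nat \<Rightarrow> nat \<Rightarrow> bool \<Rightarrow> nat \<Rightarrow> nat" where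
  "fstep q mk z qin fin = (if q = 3 \<or> q = 6 then 1 else if q = 0 \<and> qin \<and> mk = 1 then 2
     else if fin \<noteq> 0 \<and> z = 1 then 0 else fin)"
definition mstep :: "nat \<Rightarrow> nat \<Rightarrow> nat \<Rightarrow> nat" where
  "mstep mk z fin = (if fin \<noteq> 0 \<and> z = 1 then (if fin = 1 then 1 else 2) else mk)"

definition qs :: "nat \<Rightarrow> bool" where "qs q \<longleftrightarrow> q = 2 \<or> q = 4 \<or> q = 7"

definition Ts :: "nat \<Rightarrow> nat" where "Ts p = 2*p + 2 + seg p"

lemma TQ_ge: "p \<ge> 1 \<Longrightarrow> TQ p \<ge> 2*p+1"
  using seg_pos[of p] seg_prev_mark[of p] by (auto simp: TQ_def)

lemma qsend: "qs (Gq p t) \<longleftrightarrow> t = Ts p"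
proof (cases "p = 0")
  case True then show ?thesis by (auto simp: qs_def Gq_def Ts_def seg_def)
next
  case False
  then show ?thesis using seg_pos[of p] seg_prev_mark[of p]
    by (auto simp: qs_def Gq_def Ts_def TQ_def)
qed

lemma Ts_prev: "p \<ge> 1 \<Longrightarrow> Ts (p - 1) + 1 = TQ p"
  using seg_prev_mark[of p] seg_prev_nomark[of p] seg_pos[of p]
  by (cases "mark p") (auto simp: Ts_def TQ_def)

lemma z_step: "p \<ge> 1 \<Longrightarrow> zstep (Gz p t) (Gz (p-1) t = 2) = Gz p (t+1)"
  by (auto simp: zstep_def Gz_def)
lemma z_step0: "t \<ge> 1 \<Longrightarrow> zstep (Gz 0 t) False = Gz 0 (t+1)"
  by (auto simp: zstep_def Gz_def)

lemma q_step: "p \<ge> 1 \<Longrightarrow> qstep (Gq p t) (Gm p t) (qs (Gq (p-1) t)) = Gq p (t+1)"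
  using Ts_prev[of p] TQ_ge[of p] qsend[of "p-1" t] seg_pos[of p]
  by (auto simp: qstep_def Gq_def Gm_def dest: mark_not_half)

lemma q_step0: "t \<ge> 1 \<Longrightarrow> qstep (Gq 0 t) (Gm 0 t) False = Gq 0 (t+1)"
  by (auto simp: qstep_def Gq_def)


lemma case_mark:
  assumes "p \<ge> 1" "mark p"
  obtains j where "seg p = Suc j" "seg (p - 1) = j" "j \<ge> 1" "p = j*j + 2*j"
proof -
  have k2: "seg p \<ge> 2" and sp: "seg (p-1) = seg p - 1" using seg_prev_mark[OF assms] by auto
  obtain j where j: "seg p = Suc j" using k2 by (cases "seg p") auto
  have "Suc p = Suc j * Suc j" using assms(2) j by (simp add: mark_def)
  then have "p = j*j + 2*j" by simp
  with j sp k2 show ?thesis by (intro that) auto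
qed

lemma case_nomark:
  assumes "p \<ge> 1" "\<not> mark p"
  shows "seg (p - 1) = seg p" "seg p * seg p \<le> p" "p < seg p * seg p + 2 * seg p"
  using seg_prev_nomark[OF assms] seg_lo[of p] seg_hi[of p] assms(2)
  by (auto simp: mark_def algebra_simps)

lemma f_meet: "p \<ge> 1 \<Longrightarrow> Gf (p-1) (2*p) = (if half p then 1 else if mark p then 2 else 0)"
proof -
  assume p: "p \<ge> 1"
  show ?thesis
  proof (cases "mark p")
    case True
    then obtain j where "seg p = Suc j" "seg (p - 1) = j" "j \<ge> 1" "p = j*j + 2*j"
      using case_mark p by blast
    then show ?thesis using True by (auto simp: Gf_def dest: mark_not_half)
  next
    case False
    note c = case_nomark[OF p False]
    show ?thesis using c False p by (auto simp: Gf_def half_def)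
  qed
qed

lemma m_step: "p \<ge> 1 \<Longrightarrow> mstep (Gm p t) (Gz p t) (Gf (p-1) t) = Gm p (t+1)"
  using f_meet[of p]
  by (auto simp: mstep_def Gz_def Gm_def dest: mark_not_half)

lemma m_step0: "t \<ge> 1 \<Longrightarrow> mstep (Gm 0 t) (Gz 0 t) 0 = Gm 0 (t+1)"
  by (auto simp: mstep_def Gm_def)

lemma f_step0: "t \<ge> 1 \<Longrightarrow> fstep (Gq 0 t) (Gm 0 t) (Gz 0 t) False 0 = Gf 0 (t+1)"
  by (auto simp: fstep_def Gq_def Gf_def seg_def)

lemma f_step: "p \<ge> 1 \<Longrightarrow> t \<ge> 1 \<Longrightarrow>
   fstep (Gq p t) (Gm p t) (Gz p t) (qs (Gq (p-1) t)) (Gf (p-1) t) = Gf p (t+1)"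
proof -
  assume p: "p \<ge> 1" and t: "t \<ge> 1"
  have qsp: "qs (Gq (p-1) t) \<longleftrightarrow> t + 1 = TQ p" using qsend[of "p-1" t] Ts_prev[OF p] by auto
  have gq: "Gq p t = (if t = TQ p then 1 else if t = TQ p + 1 then (if mark p then 3 else 2)
     else if t = TQ p + 2 \<and> mark p then 4 else 0)" using p by (simp add: Gq_def)
  show ?thesis
  proof (cases "mark p")
    case True
    then obtain j where j: "seg p = Suc j" "seg (p - 1) = j" "j \<ge> 1" "p = j*j + 2*j"
      using case_mark p by blast
    have tq: "TQ p = 2*p + 1 + j" using j True by (simp add: TQ_def)
    have f1: "Gf (p-1) t = (if t = 2*p then 2 else 0)"
    proof -
      have "\<not> p - 1 < j*j + j" using j by simp
      moreover have "p - 1 + j*j + 2*j + 1 = 2*p" using j by simp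
      ultimately show ?thesis using j by (simp add: Gf_def)
    qed
    have f2: "Gf p (t+1) = (if t = TQ p + 1 then 1 else 0)"
    proof -
      have "p < Suc j * Suc j + Suc j" using j by simp
      moreover have "p + Suc j * Suc j + Suc j + 1 = TQ p + 2" using j tq by simp
      ultimately show ?thesis using j by (simp add: Gf_def)
    qed
    have gm: "Gm p t \<noteq> 1" using True by (auto simp: Gm_def dest: mark_not_half)
    have "TQ p + 1 \<noteq> 2 * p" "TQ p \<noteq> 2 * p" "TQ p + 2 \<noteq> 2*p" using tq by auto
    then show ?thesis using True gq f1 f2 gm p
      by (auto simp: fstep_def Gz_def)
  next
    case False
    note c = case_nomark[OF p False]
    let ?k = "seg p"
    have tq: "TQ p = 2*p + 1 + ?k" using False by (simp add: TQ_def)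
    have k1: "?k \<ge> 1" by (rule seg_pos)
    show ?thesis
    proof (cases "half p")
      case True
      have hp: "p = ?k * ?k + ?k" using True by (simp add: half_def)
      have f1: "Gf (p-1) t = (if t = 2*p then 1 else 0)"
      proof -
        have "p - 1 < ?k * ?k + ?k" using hp k1 by simp
        moreover have "p - 1 + ?k * ?k + ?k + 1 = 2*p" using hp k1 by simp
        ultimately show ?thesis using c hp k1 by (simp add: Gf_def)
      qed
      have f2: "Gf p (t+1) = (if t + 1 = TQ p then 2 else 0)"
      proof -
        have "\<not> p < ?k * ?k + ?k" using hp by simp
        moreover have "p + ?k * ?k + 2 * ?k + 1 = TQ p" using hp tq by simp
        ultimately show ?thesis by (simp add: Gf_def)
      qed
      have gm: "Gm p t = (if 2*p+1 \<le> t then 1 else 0)" using True False by (simp add: Gm_def)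
      have "TQ p \<ge> 2*p+2" using tq k1 by simp
      then show ?thesis using False gq f1 f2 gm qsp p
        by (auto simp: fstep_def Gz_def)
    next
      case nh: False
      have f12: "Gf (p-1) t = Gf p (t+1)"
      proof -
        have ne: "p \<noteq> ?k * ?k + ?k" using nh by (simp add: half_def)
        have cc: "(p - 1 < ?k * ?k + ?k) = (p < ?k * ?k + ?k)" using ne p by linarith
        have e1: "(t = p - 1 + ?k * ?k + ?k + 1) = (t + 1 = p + ?k * ?k + ?k + 1)" using p by linarith
        have e2: "(t = p - 1 + ?k * ?k + 2 * ?k + 1) = (t + 1 = p + ?k * ?k + 2 * ?k + 1)" using p by linarith
        show ?thesis unfolding Gf_def c(1) cc e1 e2 by simp
      qed
      have f1: "Gf (p-1) (2*p) = 0" using f_meet[OF p] nh False by simp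
      have gm: "Gm p t = 0" using nh False by (simp add: Gm_def)
      show ?thesis using False gq f12 f1 gm p
        by (auto simp: fstep_def Gz_def)
    qed
  qed
qed



datatype st = Ini letter | Dd | Bs bool | As nat nat nat nat bool
datatype ms = MLet letter | MSig bool bool nat bool | MPoi

definition stA :: "nat \<Rightarrow> nat \<Rightarrow> nat \<Rightarrow> nat \<Rightarrow> bool \<Rightarrow> bool \<Rightarrow> nat \<Rightarrow> bool \<Rightarrow> st" where
  "stA z q f mk zi qi fi ri = As (zstep z zi) (qstep q mk qi) (fstep q mk z qi fi) (mstep mk z fi) ri"

fun dA :: "ms msg \<Rightarrow> st \<Rightarrow> st" where
  "dA x (Ini c) = (case x of
      Bnd \<Rightarrow> (if c = La then As 0 0 0 0 True else Bs True)
    | Sym (MLet d) \<Rightarrow> (if c = La then (if d = La then As 0 0 0 0 False else As 2 5 0 2 False)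
                      else (if d = Lb then Bs False else Dd))
    | _ \<Rightarrow> Dd)"
| "dA x Dd = Dd"
| "dA x (Bs r) = (case x of Sym MPoi \<Rightarrow> Dd | Sym (MLet d) \<Rightarrow> Dd
    | Sym (MSig zs qi fs rs) \<Rightarrow> Bs rs | _ \<Rightarrow> Bs False)"
| "dA x (As z q f mk r) = (case x of Sym MPoi \<Rightarrow> Dd | Sym (MLet d) \<Rightarrow> Dd
    | Sym (MSig zs qi fs rs) \<Rightarrow> stA z q f mk zs qi (min fs 2) rs
    | _ \<Rightarrow> stA z q f mk False False 0 False)"

fun outA :: "st \<Rightarrow> ms option" where
  "outA (Ini c) = Some (MLet c)"
| "outA Dd = Some MPoi"
| "outA (Bs r) = (if r then Some (MSig False False 0 True) else None)"
| "outA (As z q f mk r) = (if z = 2 \<or> qs q \<or> f \<noteq> 0 \<or> r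
      then Some (MSig (z = 2) (qs q) f r) else None)"

definition AccA :: "st set" where
  "AccA = {s. \<exists>z q f mk. s = As z q f mk True \<and> qs q}"

definition SA :: "st set" where
  "SA = {s. case s of As z q f mk r \<Rightarrow> z \<le> 2 \<and> q \<le> 7 \<and> f \<le> 2 \<and> mk \<le> 2 | _ \<Rightarrow> True}"

definition MA :: "(st, ms) ca" where
  "MA = \<lparr> states = SA, acc = AccA, inp = Ini, bl = outA, br = (\<lambda>_. None),
          delta = (\<lambda>x s y. dA y s) \<rparr>"

lemma cfgA_0: "oca_cfg MA w 0 i = Ini (w ! (i - 1))"
  by (simp add: MA_def)

declare oca_cfg.simps[simp del]

lemma cfgA_Suc: "oca_cfg MA w (Suc t) i = dA (if i = length w then (if t = 0 then Bnd else Bot)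
      else to_msg (outA (oca_cfg MA w t (i + 1)))) (oca_cfg MA w t i)"
  by (simp add: MA_def oca_cfg.simps)

lemma dA_As: "dA (to_msg (outA (As z q f mk r))) (As z' q' f' mk' r') =
     stA z' q' f' mk' (z = 2) (qs q) (min f 2) r"
  by (auto simp: to_msg_def)

lemma dA_Bs_As: "dA (to_msg (outA (Bs r))) (As z' q' f' mk' r') =
     stA z' q' f' mk' False False 0 r"
  by (auto simp: to_msg_def)

lemma dA_Bs_Bs: "dA (to_msg (outA (Bs r))) (Bs r') = Bs r"
  by (auto simp: to_msg_def)

lemma Gf_le: "Gf p t \<le> 2" by (simp add: Gf_def)

lemma nth_w:
  assumes "w = replicate n La @ replicate m Lb" "1 \<le> i" "i \<le> n + m"
  shows "w ! (i - 1) = (if i \<le> n then La else Lb)"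
  using assms by (auto simp: nth_append)

definition Gst :: "nat \<Rightarrow> nat \<Rightarrow> nat \<Rightarrow> nat \<Rightarrow> st" where
  "Gst n m t i = (if i \<le> n then As (Gz (n-i) t) (Gq (n-i) t) (Gf (n-i) t) (Gm (n-i) t) (t + i = n + m + 1)
      else Bs (t + i = n + m + 1))"

lemma G_one_p:
  assumes "p \<ge> 1" shows "Gz p 1 = 0" "Gq p 1 = 0" "Gf p 1 = 0" "Gm p 1 = 0"
  using assms TQ_ge[OF assms] by (auto simp: Gz_def Gq_def Gf_def Gm_def)

lemma G_one_0: "Gz 0 1 = 2" "Gq 0 1 = 5" "Gf 0 1 = 0" "Gm 0 1 = 2"
  by (auto simp: Gz_def Gq_def Gf_def Gm_def seg_def mark_def)

lemma main_cfg:
  assumes w: "w = replicate n La @ replicate m Lb" and n: "n \<ge> 1" and m: "m \<ge> 1"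
  shows "t \<ge> 1 \<Longrightarrow> 1 \<le> i \<Longrightarrow> i \<le> n + m \<Longrightarrow> oca_cfg MA w t i = Gst n m t i"
proof (induction t arbitrary: i)
  case 0 then show ?case by simp
next
  case (Suc t)
  have lw: "length w = n + m" using w by simp
  show ?case
  proof (cases "t = 0")
    case True
    have c0: "oca_cfg MA w 0 j = Ini (if j \<le> n then La else Lb)" if "1 \<le> j" "j \<le> n + m" for j
      using nth_w[OF w that] by (simp add: cfgA_0)
    show ?thesis
    proof (cases "i = n + m")
      case True
      then show ?thesis using \<open>t = 0\<close> lw n m c0[of i] Suc.prems
        by (simp add: cfgA_Suc Gst_def)
    next
      case False
      then have i1: "i + 1 \<le> n + m" using Suc.prems by simp
      have r: "oca_cfg MA w (Suc t) i = dA (Sym (MLet (if i + 1 \<le> n then La else Lb)))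
              (Ini (if i \<le> n then La else Lb))"
        using \<open>t = 0\<close> False lw c0[of i] c0[of "i+1"] i1 Suc.prems by (simp add: cfgA_Suc to_msg_def)
      show ?thesis
      proof (cases "i < n")
        case True
        then show ?thesis using r G_one_p[of "n - i"] \<open>t = 0\<close> by (simp add: Gst_def)
      next
        case False
        then show ?thesis using r G_one_0 \<open>t = 0\<close> \<open>i \<noteq> n + m\<close> Suc.prems
          by (auto simp: Gst_def)
      qed
    qed
  next
    case False
    then have t1: "t \<ge> 1" by simp
    have IH: "\<And>j. 1 \<le> j \<Longrightarrow> j \<le> n + m \<Longrightarrow> oca_cfg MA w t j = Gst n m t j"
      using Suc.IH t1 by blast
    show ?thesis
    proof (cases "i = n + m")
      case True
      then show ?thesis using IH[of i] False lw Suc.prems n m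
        by (simp add: cfgA_Suc Gst_def)
    next
      case ne: False
      then have i1: "i + 1 \<le> n + m" using Suc.prems by simp
      have r: "oca_cfg MA w (Suc t) i = dA (to_msg (outA (Gst n m t (i+1)))) (Gst n m t i)"
        using ne lw IH[of i] IH[of "i+1"] i1 Suc.prems by (simp add: cfgA_Suc)
      show ?thesis
      proof (cases "i < n")
        case True
        define p where "p = n - i"
        have p1: "p \<ge> 1" using True p_def by simp
        have pm: "n - (i + 1) = p - 1" using p_def by simp
        have "oca_cfg MA w (Suc t) i = stA (Gz p t) (Gq p t) (Gf p t) (Gm p t)
              (Gz (p-1) t = 2) (qs (Gq (p-1) t)) (Gf (p-1) t) (Suc t + i = n + m + 1)"
        proof -
          have a: "Gst n m t (i+1) = As (Gz (p-1) t) (Gq (p-1) t) (Gf (p-1) t) (Gm (p-1) t) (t + (i+1) = n + m + 1)"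
            using True pm by (simp add: Gst_def)
          have b: "Gst n m t i = As (Gz p t) (Gq p t) (Gf p t) (Gm p t) (t + i = n + m + 1)"
            using True p_def by (simp add: Gst_def)
          show ?thesis unfolding r a b dA_As using Gf_le[of "p-1" t] by (simp add: min_absorb1)
        qed
        moreover have "Gst n m (Suc t) i = As (Gz p (t+1)) (Gq p (t+1)) (Gf p (t+1)) (Gm p (t+1)) (Suc t + i = n+m+1)"
          using True p_def by (simp add: Gst_def)
        ultimately show ?thesis using z_step[OF p1, of t] q_step[OF p1, of t] f_step[OF p1 t1] m_step[OF p1, of t]
          by (simp add: stA_def)
      next
        case False
        show ?thesis
        proof (cases "i = n")
          case True
          have "oca_cfg MA w (Suc t) i = stA (Gz 0 t) (Gq 0 t) (Gf 0 t) (Gm 0 t)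
              False False 0 (Suc t + i = n + m + 1)"
          proof -
            have a: "Gst n m t (i+1) = Bs (t + (i+1) = n + m + 1)"
              using True by (simp add: Gst_def)
            have b: "Gst n m t i = As (Gz 0 t) (Gq 0 t) (Gf 0 t) (Gm 0 t) (t + i = n + m + 1)"
              using True by (simp add: Gst_def)
            show ?thesis unfolding r a b dA_Bs_As by simp
          qed
          then show ?thesis using True t1
            by (simp add: Gst_def stA_def z_step0 q_step0 f_step0 m_step0)
        next
          case False
          have a: "Gst n m t (i+1) = Bs (t + (i+1) = n + m + 1)"
            using False \<open>\<not> i < n\<close> by (simp add: Gst_def)
          have b: "Gst n m t i = Bs (t + i = n + m + 1)"
            using False \<open>\<not> i < n\<close> by (simp add: Gst_def)
          show ?thesis unfolding r a b dA_Bs_Bs using False \<open>\<not> i < n\<close> by (simp add: Gst_def)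
        qed
      qed
    qed
  qed
qed




fun rf :: "st \<Rightarrow> bool" where
  "rf (As z q f mk r) = r" | "rf (Bs r) = r" | "rf _ = False"

lemma dA_not_Ini: "dA x s \<noteq> Ini c"
  by (cases s; cases x) (auto simp: stA_def split: ms.splits)

lemma rf_dA: "rf (dA x s) \<Longrightarrow> x = Bnd \<or> (\<exists>a b c. x = Sym (MSig a b c True))"
  by (cases s; cases x) (auto simp: stA_def split: ms.splits if_splits)

lemma rf_out: "to_msg (outA s) = Sym (MSig a b c True) \<Longrightarrow> rf s"
  by (cases s) (auto simp: to_msg_def split: if_splits)

lemma r_time: "rf (oca_cfg MA w t i) \<Longrightarrow> 1 \<le> i \<Longrightarrow> i \<le> length w \<Longrightarrow> t + i = length w + 1"
proof (induction t arbitrary: i)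
  case 0 then show ?case by (simp add: cfgA_0)
next
  case (Suc t)
  show ?case
  proof (cases "i = length w")
    case True
    show ?thesis
    proof (cases "t = 0")
      case True then show ?thesis using \<open>i = length w\<close> by simp
    next
      case False
      then show ?thesis using Suc.prems \<open>i = length w\<close> rf_dA[of Bot] by (auto simp: cfgA_Suc)
    qed
  next
    case False
    then have "rf (dA (to_msg (outA (oca_cfg MA w t (i + 1)))) (oca_cfg MA w t i))"
      using Suc.prems by (simp add: cfgA_Suc)
    then have "to_msg (outA (oca_cfg MA w t (i + 1))) = Bnd \<or>
        (\<exists>a b c. to_msg (outA (oca_cfg MA w t (i + 1))) = Sym (MSig a b c True))" by (rule rf_dA)
    moreover have "to_msg (outA (oca_cfg MA w t (i + 1))) \<noteq> Bnd" by (simp add: to_msg_def split: option.splits)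
    ultimately have "rf (oca_cfg MA w t (i + 1))" using rf_out by blast
    then have "t + (i + 1) = length w + 1" using Suc.IH[of "i+1"] Suc.prems False by simp
    then show ?thesis by simp
  qed
qed

lemma acc_rf: "s \<in> AccA \<Longrightarrow> rf s" by (auto simp: AccA_def)

lemma acc_time: "oca_cfg MA w t 1 \<in> AccA \<Longrightarrow> w \<noteq> [] \<Longrightarrow> t = length w"
  using r_time[of w t 1] acc_rf by (cases w) auto

lemma not_Ini_pos: "t \<ge> 1 \<Longrightarrow> oca_cfg MA w t i \<noteq> Ini c"
  by (cases t) (auto simp: cfgA_Suc dA_not_Ini)

lemma dead_persist: "oca_cfg MA w t i = Dd \<Longrightarrow> oca_cfg MA w (t + k) i = Dd"
  by (induction k) (auto simp: cfgA_Suc)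


lemma poison:
  assumes "j + 1 < length w" "w ! j = Lb" "w ! (j + 1) = La"
  shows "oca_cfg MA w (j + 1) 1 = Dd"
proof -
  have c1: "oca_cfg MA w 1 (j + 1) = Dd"
    using assms by (simp add: cfgA_Suc[of w 0, simplified] cfgA_0 to_msg_def)
  have "\<forall>d. d \<le> j \<longrightarrow> oca_cfg MA w (1 + d) (j + 1 - d) = Dd"
  proof (intro allI)
    fix d show "d \<le> j \<longrightarrow> oca_cfg MA w (1 + d) (j + 1 - d) = Dd"
    proof (induction d)
      case 0 then show ?case using c1 by simp
    next
      case (Suc d)
      show ?case
      proof
        assume dj: "Suc d \<le> j"
        have prev: "oca_cfg MA w (1 + d) (j - d + 1) = Dd" using Suc.IH dj
          by (metis Suc_diff_le Suc_eq_plus1 Suc_leD)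
        have ne: "j - d \<noteq> length w" using assms dj by simp
        have ni: "oca_cfg MA w (1 + d) (j - d) \<noteq> Ini c" for c by (rule not_Ini_pos) simp
        have "oca_cfg MA w (Suc (1 + d)) (j - d) = dA (Sym MPoi) (oca_cfg MA w (1 + d) (j - d))"
          using ne prev by (simp add: cfgA_Suc to_msg_def)
        also have "\<dots> = Dd" using ni by (cases "oca_cfg MA w (1 + d) (j - d)") auto
        finally show "oca_cfg MA w (1 + Suc d) (j + 1 - Suc d) = Dd" using dj
          by (simp add: Suc_diff_le)
      qed
    qed
  qed
  then show ?thesis by (metis add.commute add_diff_cancel_right' order_refl)
qed


lemma As_letter: "oca_cfg MA w t i = As z q f mk r \<Longrightarrow> w ! (i - 1) = La"
proof (induction t arbitrary: z q f mk r)
  case 0 then show ?case by (simp add: cfgA_0)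
next
  case (Suc t)
  let ?s = "oca_cfg MA w t i"
  have h: "dA x ?s = As z q f mk r \<Longrightarrow> ?s = Ini La \<or> (\<exists>z q f mk r. ?s = As z q f mk r)" for x
    by (cases ?s; cases x) (auto split: ms.splits if_splits letter.splits)
  from Suc.prems have "\<exists>x. dA x ?s = As z q f mk r" by (auto simp: cfgA_Suc)
  then obtain x where "dA x ?s = As z q f mk r" by blast
  then have "?s = Ini La \<or> (\<exists>z q f mk r. ?s = As z q f mk r)" by (rule h)
  then show ?case
  proof
    assume "?s = Ini La"
    then have "t = 0" using not_Ini_pos[of t w i La] by (cases t) auto
    then show ?thesis using \<open>?s = Ini La\<close> by (simp add: cfgA_0)
  next
    assume "\<exists>z q f mk r. ?s = As z q f mk r"
    then show ?thesis using Suc.IH by blast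
  qed
qed


lemma all_a:
  assumes w: "w = replicate N La" and N: "N \<ge> 1"
  shows "t \<ge> 1 \<Longrightarrow> 1 \<le> i \<Longrightarrow> i \<le> N \<Longrightarrow> oca_cfg MA w t i = As 0 0 0 0 (t + i = N + 1)"
proof (induction t arbitrary: i)
  case 0 then show ?case by simp
next
  case (Suc t)
  show ?case
  proof (cases "t = 0")
    case True
    then show ?thesis using Suc.prems w
      by (auto simp: cfgA_Suc cfgA_0 to_msg_def)
  next
    case False
    show ?thesis
    proof (cases "i = N")
      case True
      then show ?thesis using Suc.IH[of i] Suc.prems False w
        by (simp add: cfgA_Suc stA_def zstep_def qstep_def fstep_def mstep_def)
    next
      case ne: False
      have a: "oca_cfg MA w t (i+1) = As 0 0 0 0 (t + (i + 1) = N + 1)" using Suc.IH[of "i+1"] Suc.prems False ne by simp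
      have b: "oca_cfg MA w t i = As 0 0 0 0 (t + i = N + 1)" using Suc.IH[of "i"] Suc.prems False by simp
      have c: "oca_cfg MA w (Suc t) i = dA (to_msg (outA (oca_cfg MA w t (i+1)))) (oca_cfg MA w t i)"
        using ne w by (simp add: cfgA_Suc)
      show ?thesis unfolding c a b dA_As
        by (simp add: stA_def zstep_def qstep_def fstep_def mstep_def qs_def)
    qed
  qed
qed


lemma sorted_ab:
  "(\<forall>j. j + 1 < length w \<longrightarrow> \<not> (w ! j = Lb \<and> w ! (j + 1) = La)) \<Longrightarrow>
   \<exists>n m. w = replicate n La @ replicate m Lb"
proof (induction w)
  case Nil then show ?case by (intro exI[of _ 0]) simp
next
  case (Cons c w)
  have "\<forall>j. j + 1 < length w \<longrightarrow> \<not> (w ! j = Lb \<and> w ! (j + 1) = La)"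
  proof (intro allI impI)
    fix j assume "j + 1 < length w"
    then show "\<not> (w ! j = Lb \<and> w ! (j + 1) = La)" using Cons.prems[rule_format, of "Suc j"] by simp
  qed
  then obtain n m where nm: "w = replicate n La @ replicate m Lb" using Cons.IH by blast
  show ?case
  proof (cases c)
    case La
    then show ?thesis using nm by (intro exI[of _ "Suc n"] exI[of _ m]) simp
  next
    case Lb
    have "n = 0"
    proof (rule ccontr)
      assume "n \<noteq> 0"
      then have "w ! 0 = La" "0 + 1 < length (c # w)" using nm by (auto simp: nth_append)
      then show False using Cons.prems[rule_format, of 0] Lb by simp
    qed
    then show ?thesis using nm Lb by (intro exI[of _ 0] exI[of _ "Suc m"]) simp
  qed
qed


lemma floor_sqrt_real: "nat \<lfloor>sqrt (real n)\<rfloor> = floor_sqrt n"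
proof -
  let ?k = "floor_sqrt n"
  have a: "?k^2 \<le> n" by simp
  have b: "n < (Suc ?k)^2" by (rule Suc_floor_sqrt_power2_gt)
  have a': "(real ?k)^2 \<le> real n"
  proof -
    have "real (?k^2) \<le> real n" using a by (simp only: of_nat_le_iff)
    then show ?thesis by simp
  qed
  have b': "real n < (real ?k + 1)^2"
  proof -
    have "real n < real ((Suc ?k)^2)" using b by (simp only: of_nat_less_iff)
    then show ?thesis by (simp add: add.commute)
  qed
  have "sqrt ((real ?k)^2) \<le> sqrt (real n)" using a' by (rule real_sqrt_le_mono)
  then have l: "real ?k \<le> sqrt (real n)" by simp
  have "sqrt (real n) < sqrt ((real ?k + 1)^2)" using b' by (rule real_sqrt_less_mono)
  then have u: "sqrt (real n) < real ?k + 1" by simp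
  have "\<lfloor>sqrt (real n)\<rfloor> = int ?k" using l u by linarith
  then show ?thesis by simp
qed

lemma seg_n: "n \<ge> 1 \<Longrightarrow> seg (n - 1) = floor_sqrt n"
  by (simp add: seg_def)


lemma Gq_lang:
  assumes "n \<ge> 1"
  shows "qs (Gq (n - 1) N) \<longleftrightarrow> N = 2 * n + floor_sqrt n"
proof -
  have "qs (Gq (n - 1) N) \<longleftrightarrow> N = 2 * (n - 1) + 2 + floor_sqrt n"
    using qsend[of "n-1" N] assms by (simp add: Ts_def seg_def)
  also have "2 * (n - 1) + 2 = 2 * n" using assms by simp
  finally show ?thesis .
qed

lemma accept_main:
  assumes w: "w = replicate n La @ replicate m Lb" and n: "n \<ge> 1" and m: "m \<ge> 1"
  shows "oca_cfg MA w (n + m) 1 \<in> AccA \<longleftrightarrow> m = n + floor_sqrt n"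
proof -
  have "oca_cfg MA w (n + m) 1 = Gst n m (n+m) 1" using main_cfg[OF w n m, of "n+m" 1] n m by simp
  also have "\<dots> = As (Gz (n-1) (n+m)) (Gq (n-1) (n+m)) (Gf (n-1) (n+m)) (Gm (n-1) (n+m)) True"
    using n by (simp add: Gst_def)
  finally have c: "oca_cfg MA w (n + m) 1 = \<dots>" .
  show ?thesis unfolding c using Gq_lang[OF n, of "n+m"] by (auto simp: AccA_def)
qed

lemma lang_MA: "oca_lang MA = L1"
proof (intro set_eqI iffI)
  fix w assume "w \<in> oca_lang MA"
  then obtain t where wne: "w \<noteq> []" and acc: "oca_cfg MA w t 1 \<in> AccA"
    by (auto simp: oca_lang_def MA_def)
  have tN: "t = length w" using acc_time[OF acc wne] .
  have nop: "\<forall>j. j + 1 < length w \<longrightarrow> \<not> (w ! j = Lb \<and> w ! (j + 1) = La)"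
  proof (intro allI impI notI)
    fix j assume j: "j + 1 < length w" and "w ! j = Lb \<and> w ! (j + 1) = La"
    then have "oca_cfg MA w (j + 1) 1 = Dd" using poison by blast
    then have "oca_cfg MA w (j + 1 + (length w - (j + 1))) 1 = Dd" by (rule dead_persist)
    moreover have "j + 1 + (length w - (j + 1)) = t" using j tN by simp
    ultimately have "oca_cfg MA w t 1 = Dd" by simp
    then show False using acc by (simp add: AccA_def)
  qed
  obtain n m where w: "w = replicate n La @ replicate m Lb" using sorted_ab[OF nop] by blast
  obtain z q f mk where As: "oca_cfg MA w t 1 = As z q f mk True" and qq: "qs q"
    using acc by (auto simp: AccA_def)
  have n: "n \<ge> 1"
  proof (rule ccontr)
    assume "\<not> n \<ge> 1"
    then have "n = 0" by simp
    then have "w ! 0 = Lb" using w wne by (cases m) auto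
    then show False using As_letter[OF As] by simp
  qed
  have m: "m \<ge> 1"
  proof (rule ccontr)
    assume "\<not> m \<ge> 1"
    then have "w = replicate n La" using w by simp
    then have "oca_cfg MA w t 1 = As 0 0 0 0 (t + 1 = n + 1)" using all_a[of w n t 1] n tN wne
      by (cases t) (auto simp: cfgA_0)
    then show False using As qq by (simp add: qs_def)
  qed
  have "oca_cfg MA w (n + m) 1 \<in> AccA" using acc tN w by simp
  then have "m = n + floor_sqrt n" using accept_main[OF w n m] by simp
  then show "w \<in> L1" using w n unfolding L1_def by (auto simp: floor_sqrt_real)
next
  fix w assume "w \<in> L1"
  then obtain n where n: "n \<ge> 1" and w: "w = replicate n La @ replicate (n + floor_sqrt n) Lb"
    unfolding L1_def by (auto simp: floor_sqrt_real)
  have m: "n + floor_sqrt n \<ge> 1" using n by simp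
  have "oca_cfg MA w (n + (n + floor_sqrt n)) 1 \<in> AccA" using accept_main[OF w n m] by simp
  then show "w \<in> oca_lang MA" using w n by (auto simp: oca_lang_def MA_def)
qed

lemma rt_MA: "oca_real_time MA"
  unfolding oca_real_time_def
proof
  fix w assume "w \<in> oca_lang MA"
  then obtain t where wne: "w \<noteq> []" and acc: "oca_cfg MA w t 1 \<in> AccA"
    by (auto simp: oca_lang_def MA_def)
  then show "\<exists>t\<le>length w. oca_cfg MA w t 1 \<in> acc MA" using acc_time[OF acc wne]
    by (auto simp: MA_def)
qed

definition TF :: "nat \<Rightarrow> nat" where
  "TF p = (if p < seg p * seg p + seg p then p + seg p * seg p + seg p + 1
           else p + seg p * seg p + 2 * seg p + 1)"

lemma Gf_time: "Gf p j \<noteq> 0 \<Longrightarrow> j = TF p" by (auto simp: Gf_def TF_def split: if_splits)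
lemma Gz_time: "Gz p j = 2 \<Longrightarrow> j = 2*p+1" by (auto simp: Gz_def split: if_splits)

lemma com_MA:
  assumes w: "w = replicate n La @ replicate m Lb" and n: "n \<ge> 1" and m: "m \<ge> 1"
    and i: "1 \<le> i" "i \<le> n + m - 1"
  shows "oca_com MA w i (n + m) \<le> 5"
proof -
  let ?p = "n - (i + 1)"
  let ?A = "{j. j < n + m \<and> (br MA (oca_cfg MA w j i) \<noteq> None \<or> bl MA (oca_cfg MA w j (i + 1)) \<noteq> None)}"
  have sub: "?A \<subseteq> set [0, n + m - i, 2 * ?p + 1, Ts ?p, TF ?p]"
  proof
    fix j assume "j \<in> ?A"
    then have jN: "j < n + m" and o: "outA (oca_cfg MA w j (i + 1)) \<noteq> None" by (auto simp: MA_def)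
    show "j \<in> set [0, n + m - i, 2 * ?p + 1, Ts ?p, TF ?p]"
    proof (cases "j = 0")
      case True then show ?thesis by simp
    next
      case False
      then have c: "oca_cfg MA w j (i + 1) = Gst n m j (i + 1)" using main_cfg[OF w n m, of j "i+1"] i by simp
      show ?thesis
      proof (cases "i + 1 \<le> n")
        case True
        then have "Gz ?p j = 2 \<or> qs (Gq ?p j) \<or> Gf ?p j \<noteq> 0 \<or> j + (i + 1) = n + m + 1"
          using o c by (auto simp: Gst_def split: if_splits)
        then show ?thesis using Gz_time[of ?p j] Gf_time[of ?p j] qsend[of ?p j] by auto
      next
        case False
        then have "j + (i + 1) = n + m + 1" using o c by (auto simp: Gst_def split: if_splits)
        then show ?thesis by auto
      qed
    qed
  qed
  have "card ?A \<le> card (set [0, n + m - i, 2 * ?p + 1, Ts ?p, TF ?p])"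
    by (rule card_mono[OF _ sub]) simp
  also have "\<dots> \<le> 5" using card_length[of "[0, n + m - i, 2 * ?p + 1, Ts ?p, TF ?p]"] by simp
  finally show ?thesis by (simp add: oca_com_def)
qed

lemma mcom_MA:
  assumes "w \<in> L1" shows "oca_mcom_rt MA w \<le> 5"
proof -
  obtain n where n: "n \<ge> 1" and w: "w = replicate n La @ replicate (n + floor_sqrt n) Lb"
    using assms unfolding L1_def by (auto simp: floor_sqrt_real)
  define m where "m = n + floor_sqrt n"
  have m: "m \<ge> 1" using n m_def by simp
  have w': "w = replicate n La @ replicate m Lb" using w m_def by simp
  have lw: "length w = n + m" using w' by simp
  have fin: "finite {oca_com MA w i (length w) | i. 1 \<le> i \<and> i \<le> length w - 1}"
    by (rule finite_image_set) simp
  show ?thesis unfolding oca_mcom_rt_def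
    using fin com_MA[OF w' n m] lw by (subst Max_le_iff) auto
qed


instance letter :: countable by countable_datatype
instance st :: countable by countable_datatype
instance ms :: countable by countable_datatype

fun decm :: "nat msg \<Rightarrow> ms msg" where
  "decm Bnd = Bnd" | "decm Bot = Bot" | "decm (Sym b) = Sym (from_nat b)"

definition ME :: "(nat, nat) ca" where
  "ME = \<lparr> states = to_nat ` SA, acc = to_nat ` (AccA \<inter> SA), inp = (\<lambda>c. to_nat (Ini c)),
          bl = (\<lambda>s. map_option to_nat (outA (from_nat s))), br = (\<lambda>_. None),
          delta = (\<lambda>x s y. to_nat (dA (decm y) (from_nat s))) \<rparr>"

lemma decm_to_msg: "decm (to_msg (map_option to_nat x)) = to_msg x"
  by (cases x) (auto simp: to_msg_def)

lemma cfgE: "oca_cfg ME w t i = to_nat (oca_cfg MA w t i)"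
proof (induction t arbitrary: i)
  case 0 then show ?case by (simp add: oca_cfg.simps ME_def MA_def)
next
  case (Suc t)
  show ?case
    unfolding oca_cfg.simps(2)[of ME] Suc.IH cfgA_Suc
    by (simp add: ME_def decm_to_msg)
qed

lemma finite_letter: "finite (UNIV :: letter set)"
proof -
  have e: "(UNIV :: letter set) = {La, Lb}" by (auto intro: letter.exhaust)
  show ?thesis by (subst e) simp
qed

lemma finite_SA: "finite SA"
proof -
  have "SA \<subseteq> range Ini \<union> {Dd} \<union> range Bs \<union>
     (\<lambda>(z,q,f,mk,r). As z q f mk r) ` ({..2} \<times> {..7} \<times> {..2} \<times> {..2} \<times> UNIV)"
  proof
    fix s assume "s \<in> SA"
    then show "s \<in> range Ini \<union> {Dd} \<union> range Bs \<union>
     (\<lambda>(z,q,f,mk,r). As z q f mk r) ` ({..2} \<times> {..7} \<times> {..2} \<times> {..2} \<times> UNIV)"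
      by (cases s) (auto simp: SA_def image_iff)
  qed
  moreover have "finite (range Ini \<union> {Dd} \<union> range Bs \<union>
     (\<lambda>(z,q,f,mk,r). As z q f mk r) ` ({..2::nat} \<times> {..7::nat} \<times> {..2::nat} \<times> {..2::nat} \<times> (UNIV::bool set)))"
    using finite_letter by simp
  ultimately show ?thesis by (rule finite_subset)
qed

lemma stA_SA: "mk \<le> 2 \<Longrightarrow> fi \<le> 2 \<Longrightarrow> stA z q f mk zi qi fi ri \<in> SA"
  by (simp add: stA_def SA_def zstep_def qstep_def fstep_def mstep_def)

lemma dA_SA: "s \<in> SA \<Longrightarrow> dA x s \<in> SA"
  by (cases s; cases x) (auto simp: SA_def stA_def zstep_def qstep_def fstep_def mstep_def split: ms.splits)

lemma reach_SA: "oca_cfg MA w t i \<in> SA"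
proof (induction t arbitrary: i)
  case 0 then show ?case by (simp add: cfgA_0 SA_def)
next
  case (Suc t) then show ?case by (simp add: cfgA_Suc dA_SA)
qed

lemma is_oca_ME: "is_oca ME"
  unfolding is_oca_def wf_ca_def
proof (intro conjI allI impI)
  show "finite (states ME)" using finite_SA by (simp add: ME_def)
  have "Dd \<in> SA" by (simp add: SA_def)
  then show "states ME \<noteq> {}" by (auto simp: ME_def)
  show "acc ME \<subseteq> states ME" by (auto simp: ME_def)
  show "inj (inp ME)" by (auto simp: ME_def inj_def)
  show "range (inp ME) \<subseteq> states ME" by (auto simp: ME_def SA_def)
  fix x s y assume "s \<in> states ME"
  then show "delta ME x s y \<in> states ME" by (auto simp: ME_def intro: dA_SA)
next
  fix s show "br ME s = None" by (simp add: ME_def)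
qed

lemma accE: "oca_cfg ME w t 1 \<in> acc ME \<longleftrightarrow> oca_cfg MA w t 1 \<in> acc MA"
proof -
  have a: "acc ME = to_nat ` (AccA \<inter> SA)" "acc MA = AccA" by (simp_all add: ME_def MA_def)
  show ?thesis unfolding cfgE a inj_image_mem_iff[OF inj_to_nat] using reach_SA[of w t 1] by simp
qed

lemma langE: "oca_lang ME = oca_lang MA"
  unfolding oca_lang_def using accE by blast

lemma rtE: "oca_real_time ME"
  using rt_MA unfolding oca_real_time_def langE accE by blast

lemma comE: "oca_com ME w i t = oca_com MA w i t"
proof -
  have a: "bl ME (to_nat s) = map_option to_nat (outA s)" "bl MA = outA" "br ME = (\<lambda>_. None)" "br MA = (\<lambda>_. None)" for s
    by (simp_all add: ME_def MA_def)
  show ?thesis unfolding oca_com_def cfgE a by simp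
qed

lemma mcomE: "oca_mcom_rt ME w = oca_mcom_rt MA w"
  unfolding oca_mcom_rt_def comE ..

theorem mainTheorem1:
  shows "L_rt_MC_OCA (\<lambda>_. 1) L1"
  unfolding L_rt_MC_OCA_def
proof (intro exI conjI)
  show "is_oca ME" by (rule is_oca_ME)
  show "oca_real_time ME" by (rule rtE)
  show "oca_lang ME = L1" using langE lang_MA by simp
  show "(\<lambda>_. 5 :: real) \<in> O(\<lambda>_. 1)" by (rule bigoI[of _ 5]) simp
  show "\<forall>w\<in>oca_lang ME. real (oca_mcom_rt ME w) \<le> 5"
    using mcom_MA langE lang_MA mcomE by simp
qed


end
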